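(* Let $N\ge1$ and suppose the parameter space $\Theta$ of the correlated Bernoulli random graph model satisfies: (a) $\Theta$ is nondegenerate; (b) edge correlations are component-uniform, i.e. there is a function $\varrho_E:\Theta\to\mathbb{R}$ such that for all $\theta\in\Theta$ and all $i=1,\dots,N$, $\varrho_i(\theta)=\varrho_E(\theta)$; (c) $\Theta\not\subseteq\mathcal{R}^o$, i.e. there exists $\theta\in\Theta$ with $\varrho_E(\theta)\neq0$. Then there does not exist an unbiased estimator of $\varrho_E$, i.e. no statistic $S:\mathcal{X}\to\mathbb{R}$ satisfies $\mathbb{E}_\theta(S)=\varrho_E(\theta)$ for all $\theta\in\Theta$.
   Context: Correlated Bernoulli random graph model: fix a positive integer $N$ and let $\mathcal{R}=\{(p_1,\dots,p_N,\varrho_1,\dots,\varrho_N): p_i,\varrho_i\in[0,1]\}$; a parameter space is any $\Theta\subseteq\mathcal{R}$, and $\varrho_i(\theta)$ denotes the $(N+i)$th coordinate of $\theta$. For $\theta\in\Theta$, the pairs $(X_i,Y_i)$, $i=1,\dots,N$, of $\{0,1\}$-valued random variables are independent, $X_i,Y_i$ are marginally Bernoulli$(p_i)$ with Pearson correlation $\varrho_i$ (so $\mathbb{P}(X_i=Y_i=1)=p_i^2+\varrho_ip_i(1-p_i)$, $\mathbb{P}(X_i=Y_i=0)=(1-p_i)^2+\varrho_ip_i(1-p_i)$, $\mathbb{P}(X_i=1,Y_i=0)=\mathbb{P}(X_i=0,Y_i=1)=(1-\varrho_i)p_i(1-p_i)$). Sample space $\mathcal{X}=\{(x,y):x,y\in\{0,1\}^N\}$.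 Let $\mathcal{R}^o=\{(p_1,\dots,p_N,0,\dots,0):p_i\in\mathbb{R}\}$; $\Theta$ is nondegenerate if $\Theta\cap\mathcal{R}^o$ has an interior point relative to $\mathcal{R}^o$, i.e. there exist $z\in\Theta\cap\mathcal{R}^o$ and $\epsilon>0$ such that every point of $\mathcal{R}^o$ within distance $\epsilon$ of $z$ lies in $\Theta$. *)

theory Defs
  imports Complex_Main
begin

text \<open>Parameters theta = (p, rho) with p = (p_1..p_N), rho = (rho_1..rho_N) as real lists of
  length N (list index i corresponds to coordinate i+1). Samples (x, y) with x, y bit lists
  of length N (True = 1).\<close>

type_synonym param = "real list \<times> real list"
type_synonym sample = "bool list \<times> bool list"

definition param_R :: "nat \<Rightarrow> param set" where
  "param_R N = {(p, r). length p = N \<and> length r = N \<and>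
                 (\<forall>i<N. 0 \<le> p ! i \<and> p ! i \<le> 1 \<and> 0 \<le> r ! i \<and> r ! i \<le> 1)}"

definition param_Ro :: "nat \<Rightarrow> param set" where
  "param_Ro N = {(p, r). length p = N \<and> length r = N \<and> (\<forall>i<N. r ! i = 0)}"

definition param_dist :: "nat \<Rightarrow> param \<Rightarrow> param \<Rightarrow> real" where
  "param_dist N a b = sqrt (\<Sum>i<N. (fst a ! i - fst b ! i)^2 + (snd a ! i - snd b ! i)^2)"

definition nondegenerate :: "nat \<Rightarrow> param set \<Rightarrow> bool" where
  "nondegenerate N \<Theta> \<longleftrightarrow> (\<exists>z \<in> \<Theta> \<inter> param_Ro N. \<exists>\<epsilon>>0.
       \<forall>w \<in> param_Ro N. param_dist N z w < \<epsilon> \<longrightarrow> w \<in> \<Theta>)"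

text \<open>Joint pmf of a correlated Bernoulli pair with marginal p and correlation r.\<close>
definition cb_prob :: "real \<Rightarrow> real \<Rightarrow> bool \<Rightarrow> bool \<Rightarrow> real" where
  "cb_prob p r a b =
     (if a \<and> b then p^2 + r * p * (1 - p)
      else if \<not> a \<and> \<not> b then (1 - p)^2 + r * p * (1 - p)
      else (1 - r) * p * (1 - p))"

definition sample_space :: "nat \<Rightarrow> sample set" where
  "sample_space N = {(x, y). length x = N \<and> length y = N}"

definition cb_pmf :: "nat \<Rightarrow> param \<Rightarrow> sample \<Rightarrow> real" where
  "cb_pmf N \<theta> s = (\<Prod>i<N. cb_prob (fst \<theta> ! i) (snd \<theta> ! i) (fst s ! i) (snd s ! i))"

definition cb_expect :: "nat \<Rightarrow> param \<Rightarrow> (sample \<Rightarrow> real) \<Rightarrow> real" where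
  "cb_expect N \<theta> S = (\<Sum>s \<in> sample_space N. S s * cb_pmf N \<theta> s)"

end

theory Submission
  imports Defs
begin

definition EE :: "nat \<Rightarrow> (sample \<Rightarrow> real) \<Rightarrow> (nat \<Rightarrow> bool \<Rightarrow> bool \<Rightarrow> real) \<Rightarrow> real" where
  "EE N S D = (\<Sum>s\<in>sample_space N. S s * (\<Prod>i<N. D i (fst s ! i) (snd s ! i)))"

definition LL :: "nat \<Rightarrow> (sample \<Rightarrow> real) \<Rightarrow> (nat \<Rightarrow> bool \<Rightarrow> bool \<Rightarrow> real) \<Rightarrow> nat
   \<Rightarrow> (bool \<Rightarrow> bool \<Rightarrow> real) \<Rightarrow> real" where
  "LL N S D j X = (\<Sum>s\<in>sample_space N. S s * X (fst s ! j) (snd s ! j) *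
      (\<Prod>i\<in>{..<N}-{j}. D i (fst s ! i) (snd s ! i)))"

definition e0 :: "bool \<Rightarrow> bool \<Rightarrow> real" where "e0 a b = (if \<not> a \<and> \<not> b then 1 else 0)"
definition e1 :: "bool \<Rightarrow> bool \<Rightarrow> real" where "e1 a b = (if a \<noteq> b then 1 else 0)"
definition e2 :: "bool \<Rightarrow> bool \<Rightarrow> real" where "e2 a b = (if a \<and> b then 1 else 0)"

lemma EE_LL: "j < N \<Longrightarrow> EE N S D = LL N S D j (D j)"
  unfolding EE_def LL_def
  by (rule sum.cong) (simp_all add: prod.remove[of "{..<N}" j])

lemma EE_upd: "j < N \<Longrightarrow> EE N S (D(j := X)) = LL N S D j X"
proof -
  assume j: "j < N"
  have "EE N S (D(j := X)) = LL N S (D(j := X)) j X"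
    using EE_LL[OF j, of S "D(j := X)"] by simp
  also have "\<dots> = LL N S D j X"
    unfolding LL_def by (intro sum.cong refl arg_cong2[where f="(*)"] prod.cong) auto
  finally show ?thesis .
qed

lemma LL_lin:
  assumes "\<And>a b. X a b = c0 * e0 a b + c1 * e1 a b + c2 * e2 a b"
  shows "LL N S D j X = c0 * LL N S D j e0 + c1 * LL N S D j e1 + c2 * LL N S D j e2"
proof -
  define R where "R s = (\<Prod>i\<in>{..<N}-{j}. D i (fst s ! i) (snd s ! i))" for s :: sample
  have "LL N S D j X = (\<Sum>s\<in>sample_space N.
      c0 * (S s * e0 (fst s ! j) (snd s ! j) * R s) + c1 * (S s * e1 (fst s ! j) (snd s ! j) * R s)
      + c2 * (S s * e2 (fst s ! j) (snd s ! j) * R s))"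
    unfolding LL_def R_def by (rule sum.cong) (simp_all add: assms algebra_simps)
  then show ?thesis unfolding LL_def R_def
    by (simp add: sum.distrib sum_distrib_left)
qed

lemma quad:
  fixes x1 x2 x3 a b c :: real
  assumes "x1 \<noteq> x2" "x1 \<noteq> x3" "x2 \<noteq> x3"
    and "(1-x1)^2*a + x1*(1-x1)*b + x1^2*c = 0"
    and "(1-x2)^2*a + x2*(1-x2)*b + x2^2*c = 0"
    and "(1-x3)^2*a + x3*(1-x3)*b + x3^2*c = 0"
  shows "a = 0 \<and> b = 0 \<and> c = 0"
proof -
  define A B C where "A = a" and "B = b - 2*a" and "C = a - b + c"
  have h: "A + B*x + C*x^2 = (1-x)^2*a + x*(1-x)*b + x^2*c" for x
    unfolding A_def B_def C_def by (simp add: power2_eq_square algebra_simps)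
  have 1: "A + B*x1 + C*x1^2 = 0" "A + B*x2 + C*x2^2 = 0" "A + B*x3 + C*x3^2 = 0"
    using assms h by auto
  have "(x1 - x2) * (B + C*(x1+x2)) = 0" using 1 by (simp add: power2_eq_square algebra_simps)
  then have d1: "B + C*(x1+x2) = 0" using assms by simp
  have "(x1 - x3) * (B + C*(x1+x3)) = 0" using 1 by (simp add: power2_eq_square algebra_simps)
  then have d2: "B + C*(x1+x3) = 0" using assms by simp
  have "C * (x2 - x3) = (B + C*(x1+x2)) - (B + C*(x1+x3))" by (simp add: algebra_simps)
  then have "C * (x2 - x3) = 0" using d1 d2 by simp
  then have "C = 0" using assms by simp
  then have "B = 0" using d1 by simp
  then have "A = 0" using 1 \<open>C = 0\<close> by simp
  then show ?thesis using \<open>B = 0\<close> \<open>C = 0\<close> unfolding A_def B_def C_def by simp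
qed

lemma g_decomp: "cb_prob p 0 a b = (1-p)^2 * e0 a b + p*(1-p) * e1 a b + p^2 * e2 a b"
  unfolding cb_prob_def e0_def e1_def e2_def by auto

lemma sym_decomp: "X True False = X False True \<Longrightarrow>
   X a b = X False False * e0 a b + X True False * e1 a b + X True True * e2 a b"
  unfolding e0_def e1_def e2_def by (cases a; cases b) auto

theorem theorem6:
  fixes N :: nat and \<Theta> :: "param set" and rhoE :: "param \<Rightarrow> real"
  assumes "N \<ge> 1"
    and "\<Theta> \<subseteq> param_R N"
    and "nondegenerate N \<Theta>"
    and "\<forall>\<theta> \<in> \<Theta>. \<forall>i<N. snd \<theta> ! i = rhoE \<theta>"
    and "\<exists>\<theta> \<in> \<Theta>. rhoE \<theta> \<noteq> 0"
  shows "\<not> (\<exists>S :: sample \<Rightarrow> real. \<forall>\<theta> \<in> \<Theta>. cb_expect N \<theta> S = rhoE \<theta>)"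
proof
  assume "\<exists>S :: sample \<Rightarrow> real. \<forall>\<theta> \<in> \<Theta>. cb_expect N \<theta> S = rhoE \<theta>"
  then obtain S :: "sample \<Rightarrow> real" where S: "\<forall>\<theta> \<in> \<Theta>. cb_expect N \<theta> S = rhoE \<theta>" by blast
  obtain z \<epsilon> where z: "z \<in> \<Theta>" "z \<in> param_Ro N" and eps: "\<epsilon> > 0"
    and nb: "\<forall>w \<in> param_Ro N. param_dist N z w < \<epsilon> \<longrightarrow> w \<in> \<Theta>"
    using assms(3) unfolding nondegenerate_def by blast
  obtain pz rz where zz: "z = (pz, rz)" by fastforce
  have rz: "\<forall>i<N. rz ! i = 0" "length pz = N" using z(2) zz unfolding param_Ro_def by auto
  define \<delta> where "\<delta> = \<epsilon> / (N+1)"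
  have dpos: "\<delta> > 0" unfolding \<delta>_def using eps by simp
  have "N * \<delta>^2 < \<epsilon>^2"
  proof -
    have "N * \<delta>^2 = \<epsilon>^2 * (N / ((N+1)*(N+1)))" unfolding \<delta>_def
      by (simp add: power2_eq_square field_simps)
    also have "\<dots> < \<epsilon>^2 * 1"
    proof (rule mult_strict_left_mono)
      have "(real N + 1) * 1 \<le> (real N+1)*(real N+1)" by (rule mult_left_mono) auto
      then have "real N + 1 \<le> (real N+1)*(real N+1)" by (simp only: mult_1_right)
      then have "real N < (real N+1)*(real N+1)" by linarith
      moreover have "(0::real) < (real N+1)*(real N+1)" by (simp add: add_pos_nonneg)
      ultimately have "real N / ((real N+1)*(real N+1)) < 1"
        using divide_less_eq_1_pos by blast
      then show "real N / ((N+1)*(N+1)) < 1" by (simp only: of_nat_mult of_nat_add of_nat_1)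
    qed (use eps in simp)
    finally show ?thesis by simp
  qed
  note Nd = this
  let ?cond = "\<lambda>j D. (\<forall>i<j. D i True False = D i False True) \<and>
      (\<forall>i. j \<le> i \<and> i < N \<longrightarrow> (\<exists>p. \<bar>p - pz ! i\<bar> < \<delta> \<and> D i = cb_prob p 0))"
  have main: "j \<le> N \<Longrightarrow> \<forall>D. ?cond j D \<longrightarrow> EE N S D = 0" for j
  proof (induction j)
    case 0
    show ?case
    proof (intro allI impI)
      fix D assume "?cond 0 D"
      then have "\<forall>i. \<exists>p. i < N \<longrightarrow> \<bar>p - pz ! i\<bar> < \<delta> \<and> D i = cb_prob p 0" by auto
      then obtain p where p: "\<And>i. i < N \<Longrightarrow> \<bar>p i - pz ! i\<bar> < \<delta> \<and> D i = cb_prob (p i) 0"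
        by metis
      define w where "w = (map p [0..<N], replicate N (0::real))"
      have wR: "w \<in> param_Ro N" unfolding w_def param_Ro_def by simp
      have "(\<Sum>i<N. (fst z ! i - fst w ! i)^2 + (snd z ! i - snd w ! i)^2) < (\<Sum>i<N. \<delta>^2)"
      proof (rule sum_strict_mono)
        fix i assume "i \<in> {..<N}"
        then have i: "i < N" by simp
        have "\<bar>pz ! i - p i\<bar> < \<delta>" using p[OF i] by linarith
        then have "(pz ! i - p i)^2 < \<delta>^2"
          by (metis abs_ge_zero power2_abs power_strict_mono zero_less_numeral)
        then show "(fst z ! i - fst w ! i)^2 + (snd z ! i - snd w ! i)^2 < \<delta>^2"
          using i rz unfolding w_def zz by simp
      qed (use assms(1) in \<open>auto simp: lessThan_empty_iff\<close>)
      also have "\<dots> < \<epsilon>^2" using Nd by simp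
      finally have "param_dist N z w < \<epsilon>" unfolding param_dist_def
        using eps by (simp add: real_sqrt_less_iff real_less_lsqrt)
      then have wT: "w \<in> \<Theta>" using nb wR by blast
      have "rhoE w = 0" using assms(4) wT assms(1) unfolding w_def
        by (metis One_nat_def Suc_le_lessD nth_replicate snd_conv)
      moreover have "cb_expect N w S = EE N S D"
        unfolding cb_expect_def EE_def cb_pmf_def
        by (intro sum.cong refl arg_cong2[where f="(*)"] prod.cong) (auto simp: w_def p)
      ultimately show "EE N S D = 0" using S wT by simp
    qed
  next
    case (Suc j)
    then have j: "j < N" and IH: "\<forall>D. ?cond j D \<longrightarrow> EE N S D = 0" by auto
    show ?case
    proof (intro allI impI)
      fix D assume cD: "?cond (Suc j) D"
      have Lp: "(1-p)^2 * LL N S D j e0 + p*(1-p) * LL N S D j e1 + p^2 * LL N S D j e2 = 0"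
        if "\<bar>p - pz ! j\<bar> < \<delta>" for p
      proof -
        have A: "\<forall>i<j. (D(j := cb_prob p 0)) i True False = (D(j := cb_prob p 0)) i False True"
          using cD by auto
        have B: "\<forall>i. j \<le> i \<and> i < N \<longrightarrow> (\<exists>p'. \<bar>p' - pz ! i\<bar> < \<delta> \<and> (D(j := cb_prob p 0)) i = cb_prob p' 0)"
        proof (intro allI impI)
          fix i assume i: "j \<le> i \<and> i < N"
          show "\<exists>p'. \<bar>p' - pz ! i\<bar> < \<delta> \<and> (D(j := cb_prob p 0)) i = cb_prob p' 0"
          proof (cases "i = j")
            case True then show ?thesis using that by auto
          next
            case False
            then have "Suc j \<le> i \<and> i < N" using i by auto
            then show ?thesis using cD False by auto
          qed
        qed
        have "?cond j (D(j := cb_prob p 0))" using A B by blast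
        then have "EE N S (D(j := cb_prob p 0)) = 0" using IH by blast
        then have "LL N S D j (cb_prob p 0) = 0" using EE_upd[OF j] by simp
        then show ?thesis using LL_lin[OF g_decomp] by simp
      qed
      have "LL N S D j e0 = 0 \<and> LL N S D j e1 = 0 \<and> LL N S D j e2 = 0"
        by (rule quad[of "pz ! j" "pz ! j + \<delta>/2" "pz ! j - \<delta>/2"])
           (use dpos in \<open>auto intro!: Lp\<close>)
      moreover have "D j True False = D j False True" using cD by simp
      ultimately show "EE N S D = 0"
        using EE_LL[OF j] LL_lin[OF sym_decomp] by simp
    qed
  qed
  obtain \<theta> where th: "\<theta> \<in> \<Theta>" "rhoE \<theta> \<noteq> 0" using assms(5) by blast
  define D where "D i = cb_prob (fst \<theta> ! i) (snd \<theta> ! i)" for i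
  have "?cond N D" unfolding D_def cb_prob_def by auto
  then have "EE N S D = 0" using main by blast
  moreover have "cb_expect N \<theta> S = EE N S D"
    unfolding cb_expect_def EE_def cb_pmf_def D_def by simp
  ultimately show False using S th by simp
qed

end
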